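(* Let $f:\mathbb{X}\to\mathbb{R}$ be a (finite, real-valued) measurable function. If $$\mu\Big(\bigcup_{N>0}\bigcap_{n>N}\{B_nf\le 0\}\Big)>0,$$ i.e. the set of points $x$ such that $B_nf(x)\le 0$ for all sufficiently large $n$ has positive measure, then $\sup_{n>0}\sum_{i=0}^{n-1}f\circ T^i<\infty$ $\mu$-a.e. on $\mathbb{X}$.
   Context: Standing assumptions: $(\mathbb{X},\mathcal{X},\mu,T)$ is a probability space ($\mu(\mathbb{X})=1$) with $T$ an invertible, bi-measurable, measure-preserving, ergodic transformation. For a measurable $f:\mathbb{X}\to\mathbb{R}$ and $n\ge 0$, the symmetric bilateral averages are $B_nf=\frac{1}{2n+1}\sum_{i=-n}^{n}f\circ T^i$. *)

theory Defs
  imports "HOL-Probability.Probability"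
begin

definition inv_map :: "'a measure \<Rightarrow> ('a \<Rightarrow> 'a) \<Rightarrow> 'a \<Rightarrow> 'a" where
  "inv_map M T = the_inv_into (space M) T"

definition ergodic_ipt :: "'a measure \<Rightarrow> ('a \<Rightarrow> 'a) \<Rightarrow> bool" where
  "ergodic_ipt M T \<longleftrightarrow>
     prob_space M \<and>
     bij_betw T (space M) (space M) \<and>
     T \<in> M \<rightarrow>\<^sub>M M \<and>
     inv_map M T \<in> M \<rightarrow>\<^sub>M M \<and>
     distr M M T = M \<and>
     (\<forall>A \<in> sets M. T -` A \<inter> space M = A \<longrightarrow> measure M A = 0 \<or> measure M A = 1)"

definition ipow :: "'a measure \<Rightarrow> ('a \<Rightarrow> 'a) \<Rightarrow> int \<Rightarrow> 'a \<Rightarrow> 'a" where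
  "ipow M T i = (if 0 \<le> i then T ^^ nat i else inv_map M T ^^ nat (- i))"

definition bilat_avg :: "'a measure \<Rightarrow> ('a \<Rightarrow> 'a) \<Rightarrow> ('a \<Rightarrow> real) \<Rightarrow> nat \<Rightarrow> 'a \<Rightarrow> real" where
  "bilat_avg M T f n x =
     (\<Sum>i\<in>{- int n..int n}. f (ipow M T i x)) / (2 * real n + 1)"

end

theory Submission
  imports Defs
begin


locale erg =
  fixes M :: "'a measure" and T :: "'a \<Rightarrow> 'a"
  assumes E: "ergodic_ipt M T"
begin

lemma probM: "prob_space M" using E unfolding ergodic_ipt_def by blast
lemma bij: "bij_betw T (space M) (space M)" using E unfolding ergodic_ipt_def by blast
lemma Tmeas[measurable]: "T \<in> M \<rightarrow>\<^sub>M M" using E unfolding ergodic_ipt_def by blast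
lemma invmeas[measurable]: "inv_map M T \<in> M \<rightarrow>\<^sub>M M" using E unfolding ergodic_ipt_def by blast
lemma distrT: "distr M M T = M" using E unfolding ergodic_ipt_def by blast
lemma ergod: "A \<in> sets M \<Longrightarrow> T -` A \<inter> space M = A \<Longrightarrow> measure M A = 0 \<or> measure M A = 1"
  using E unfolding ergodic_ipt_def by blast

lemma Tspace: "x \<in> space M \<Longrightarrow> T x \<in> space M"
  using bij by (auto simp: bij_betw_def)

lemma funpow_space: "x \<in> space M \<Longrightarrow> (T ^^ n) x \<in> space M"
  by (induction n) (auto simp: Tspace)

lemma funpow_meas[measurable]: "(T ^^ n) \<in> M \<rightarrow>\<^sub>M M"
proof (induction n)
  case 0 then show ?case by (simp add: measurable_ident_sets id_def)
next
  case (Suc n)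
  have "(T ^^ Suc n) = (\<lambda>x. T ((T ^^ n) x))" by auto
  then show ?case using Suc by (simp add: measurable_compose[OF Suc Tmeas])
qed

lemma invpow_meas[measurable]: "(inv_map M T ^^ n) \<in> M \<rightarrow>\<^sub>M M"
proof (induction n)
  case 0 then show ?case by (simp add: measurable_ident_sets id_def)
next
  case (Suc n)
  have "(inv_map M T ^^ Suc n) = (\<lambda>x. inv_map M T ((inv_map M T ^^ n) x))" by auto
  then show ?case using Suc by (simp add: measurable_compose[OF Suc invmeas])
qed

lemma ipow_meas[measurable]: "ipow M T i \<in> M \<rightarrow>\<^sub>M M"
  unfolding ipow_def by auto

lemma inv_T: "x \<in> space M \<Longrightarrow> inv_map M T (T x) = x"
  using bij unfolding inv_map_def bij_betw_def by (simp add: the_inv_into_f_f)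

lemma invpow_T: "x \<in> space M \<Longrightarrow> m \<le> k \<Longrightarrow> (inv_map M T ^^ m) ((T ^^ k) x) = (T ^^ (k - m)) x"
proof (induction m)
  case 0 then show ?case by simp
next
  case (Suc m)
  then have "k - m = Suc (k - Suc m)" by simp
  then have "(T ^^ (k - m)) x = T ((T ^^ (k - Suc m)) x)" by simp
  then show ?case using Suc by (simp add: inv_T funpow_space)
qed

lemma ipow_T: "x \<in> space M \<Longrightarrow> - int k \<le> i \<Longrightarrow> ipow M T i ((T ^^ k) x) = (T ^^ nat (int k + i)) x"
proof (cases "0 \<le> i")
  case True
  then show ?thesis
    by (simp add: ipow_def nat_add_distrib funpow_add[symmetric, THEN fun_cong, simplified comp_def] add.commute)
next
  case False
  assume x: "x \<in> space M" and ik: "- int k \<le> i"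
  then have "nat (- i) \<le> k" using False by linarith
  then show ?thesis using False x ik
  proof -
    have "k - nat (- i) = nat (int k + i)" using False ik by linarith
    then show ?thesis using False x \<open>nat (- i) \<le> k\<close> by (simp add: ipow_def invpow_T)
  qed
qed

end

context erg begin

definition S :: "('a \<Rightarrow> real) \<Rightarrow> nat \<Rightarrow> 'a \<Rightarrow> real" where
  "S h n x = (\<Sum>i<n. h ((T ^^ i) x))"

lemma S_meas[measurable]: "h \<in> borel_measurable M \<Longrightarrow> S h n \<in> borel_measurable M"
  unfolding S_def by (intro borel_measurable_sum measurable_compose[OF funpow_meas])

lemma S_0[simp]: "S h 0 x = 0" by (simp add: S_def)

lemma S_Suc: "S h (Suc n) x = h x + S h n (T x)"
  unfolding S_def sum.lessThan_Suc_shift by (simp add: funpow_Suc_right del: funpow.simps)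

definition Dset :: "('a \<Rightarrow> real) \<Rightarrow> 'a set" where
  "Dset h = {x \<in> space M. \<forall>B::nat. \<exists>n>0. S h n x > real B}"

lemma Dset_real: "x \<in> Dset h \<longleftrightarrow> x \<in> space M \<and> (\<forall>B::real. \<exists>n>0. S h n x > B)"
proof -
  have "(\<forall>B::nat. \<exists>n>0. S h n x > real B) \<longleftrightarrow> (\<forall>B::real. \<exists>n>0. S h n x > B)"
  proof
    assume a: "\<forall>B::nat. \<exists>n>0. S h n x > real B"
    show "\<forall>B::real. \<exists>n>0. S h n x > B"
    proof
      fix B :: real
      obtain m :: nat where "B < real m" using reals_Archimedean2 by blast
      with a show "\<exists>n>0. S h n x > B" by (meson less_trans)
    qed
  qed auto
  then show ?thesis unfolding Dset_def by auto
qed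

lemma Dset_sets[measurable]: "h \<in> borel_measurable M \<Longrightarrow> Dset h \<in> sets M"
  unfolding Dset_def by measurable

lemma Dset_inv: "T -` Dset h \<inter> space M = Dset h"
proof (intro set_eqI iffI)
  fix x assume "x \<in> T -` Dset h \<inter> space M"
  then have x: "x \<in> space M" and Tx: "\<forall>B::real. \<exists>n>0. S h n (T x) > B" by (auto simp: Dset_real)
  have "\<exists>n>0. S h n x > B" for B
  proof -
    obtain n where "n > 0" "S h n (T x) > B - h x" using Tx by blast
    then show ?thesis by (intro exI[of _ "Suc n"]) (simp add: S_Suc)
  qed
  then show "x \<in> Dset h" using x by (simp add: Dset_real)
next
  fix x assume "x \<in> Dset h"
  then have x: "x \<in> space M" and X: "\<forall>B::real. \<exists>n>0. S h n x > B" by (auto simp: Dset_real)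
  have "\<exists>n>0. S h n (T x) > B" for B
  proof -
    obtain n where n: "n > 0" "S h n x > B + \<bar>h x\<bar> + \<bar>B\<bar>" using X by blast
    show ?thesis
    proof (cases n)
      case 0 then show ?thesis using n by simp
    next
      case (Suc m)
      then have "m > 0" using n by (cases m) (auto simp: S_Suc)
      moreover have "S h m (T x) > B" using n Suc by (simp add: S_Suc)
      ultimately show ?thesis by blast
    qed
  qed
  then show "x \<in> T -` Dset h \<inter> space M" using x by (simp add: Dset_real Tspace)
qed

end


sublocale erg \<subseteq> P: prob_space M by (rule probM)

context erg begin

lemma S_bound:
  assumes b: "\<And>x. x \<in> space M \<Longrightarrow> \<bar>h x\<bar> \<le> b" and x: "x \<in> space M"
  shows "\<bar>S h k x\<bar> \<le> real k * b"
proof -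
  have "\<bar>S h k x\<bar> \<le> (\<Sum>i<k. \<bar>h ((T ^^ i) x)\<bar>)" unfolding S_def by (rule sum_abs)
  also have "\<dots> \<le> (\<Sum>i<k. b)" by (intro sum_mono b funpow_space x)
  finally show ?thesis by simp
qed

definition Mx :: "('a \<Rightarrow> real) \<Rightarrow> nat \<Rightarrow> 'a \<Rightarrow> real" where
  "Mx h n x = Max ((\<lambda>k. S h k x) ` {..n})"

lemma Mx_meas[measurable]: "h \<in> borel_measurable M \<Longrightarrow> Mx h n \<in> borel_measurable M"
  unfolding Mx_def by (intro borel_measurable_Max) auto

lemma Mx_ge: "k \<le> n \<Longrightarrow> S h k x \<le> Mx h n x"
  unfolding Mx_def by (intro Max_ge) auto

lemma Mx_nonneg: "0 \<le> Mx h n x"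
  using Mx_ge[of 0 n h x] by simp

lemma Mx_in: "\<exists>k\<le>n. Mx h n x = S h k x"
proof -
  have "Mx h n x \<in> (\<lambda>k. S h k x) ` {..n}" unfolding Mx_def by (intro Max_in) auto
  then show ?thesis by auto
qed

lemma Mx_bound:
  assumes b: "\<And>x. x \<in> space M \<Longrightarrow> \<bar>h x\<bar> \<le> b" and x: "x \<in> space M" and "0 \<le> b"
  shows "\<bar>Mx h n x\<bar> \<le> real n * b"
proof -
  obtain k where k: "k \<le> n" "Mx h n x = S h k x" using Mx_in by blast
  have "\<bar>S h k x\<bar> \<le> real k * b" by (rule S_bound[OF b x])
  also have "\<dots> \<le> real n * b" using k \<open>0 \<le> b\<close> by (simp add: mult_right_mono)
  finally show ?thesis using k by simp
qed

lemma Mx_step: "Mx h n x \<le> max 0 (h x + Mx h n (T x))"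
  unfolding Mx_def[of h n x]
proof (intro Max.boundedI)
  fix y assume "y \<in> (\<lambda>k. S h k x) ` {..n}"
  then obtain k where k: "k \<le> n" "y = S h k x" by auto
  show "y \<le> max 0 (h x + Mx h n (T x))"
  proof (cases k)
    case 0 then show ?thesis using k by simp
  next
    case (Suc j)
    then have "S h j (T x) \<le> Mx h n (T x)" using k by (intro Mx_ge) simp
    then show ?thesis using k Suc by (simp add: S_Suc)
  qed
qed auto

lemma maximal:
  assumes hm[measurable]: "h \<in> borel_measurable M"
    and b: "\<And>x. x \<in> space M \<Longrightarrow> \<bar>h x\<bar> \<le> b" and b0: "0 \<le> b"
  shows "0 \<le> (\<integral>x. h x * indicator {x \<in> space M. Mx h n x > 0} x \<partial>M)"
proof -
  let ?P = "{x \<in> space M. Mx h n x > 0}"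
  have Pm[measurable]: "?P \<in> sets M" by measurable
  have iM: "integrable M (Mx h n)"
    by (rule P.integrable_const_bound[where B="real n * b"]) (auto intro: Mx_bound[OF b _ b0])
  have iMT: "integrable M (\<lambda>x. Mx h n (T x))"
    by (rule P.integrable_const_bound[where B="real n * b"]) (use Mx_bound[OF b Tspace b0] in \<open>auto intro!: AE_I2\<close>)
  have ih: "integrable M (\<lambda>x. h x * indicator ?P x)"
    by (rule P.integrable_const_bound[where B="b"]) (auto simp: indicator_def b b0)
  have eq: "(\<integral>x. Mx h n (T x) \<partial>M) = (\<integral>x. Mx h n x \<partial>M)"
    using integral_distr[OF Tmeas Mx_meas[OF hm], of n] distrT by simp
  have pw: "Mx h n x - Mx h n (T x) \<le> h x * indicator ?P x" if x: "x \<in> space M" for x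
  proof (cases "x \<in> ?P")
    case True
    then have "Mx h n x > 0" by simp
    then show ?thesis using Mx_step[of h n x] True by (simp add: max_def split: if_splits)
  next
    case False
    then have "Mx h n x = 0" using Mx_nonneg[of h n x] x by simp
    then show ?thesis using Mx_nonneg[of h n "T x"] False by simp
  qed
  have "(\<integral>x. Mx h n x - Mx h n (T x) \<partial>M) \<le> (\<integral>x. h x * indicator ?P x \<partial>M)"
    by (rule integral_mono[OF Bochner_Integration.integrable_diff[OF iM iMT] ih pw])
  moreover have "(\<integral>x. Mx h n x - Mx h n (T x) \<partial>M) = 0"
    using Bochner_Integration.integral_diff[OF iM iMT] eq by simp
  ultimately show ?thesis by simp
qed

end

context erg begin

lemma Mx_mono: "m \<le> n \<Longrightarrow> Mx h m x \<le> Mx h n x"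
proof -
  assume mn: "m \<le> n"
  obtain k where "k \<le> m" "Mx h m x = S h k x" using Mx_in by blast
  then show ?thesis using Mx_ge[of k n h x] mn by simp
qed

lemma birk:
  assumes F[measurable]: "F \<in> sets M" and c: "measure M F < c"
  shows "emeasure M (Dset (\<lambda>x. indicator F x - c)) = 0"
proof -
  define h where "h = (\<lambda>x. indicator F x - c :: real)"
  have hm[measurable]: "h \<in> borel_measurable M" unfolding h_def by measurable
  define b where "b = 1 + \<bar>c\<bar>"
  have b0: "0 < b" unfolding b_def by simp
  have hb: "\<bar>h x\<bar> \<le> b" for x unfolding h_def b_def by (auto simp: indicator_def abs_if)
  define D where "D = Dset h"
  have Dm[measurable]: "D \<in> sets M" unfolding D_def by (rule Dset_sets[OF hm])
  have "measure M D = 0 \<or> measure M D = 1"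
    unfolding D_def by (rule ergod[OF Dset_sets[OF hm] Dset_inv])
  moreover have "measure M D \<noteq> 1"
  proof
    assume D1: "measure M D = 1"
    define P where "P n = {x \<in> space M. Mx h n x > 0}" for n
    have Pm[measurable]: "P n \<in> sets M" for n unfolding P_def by measurable
    have inc: "incseq P"
      unfolding incseq_def P_def using Mx_mono by (auto intro: less_le_trans)
    have "D \<subseteq> (\<Union>n. P n)"
    proof
      fix x assume "x \<in> D"
      then obtain n where "n > 0" "S h n x > real 0" "x \<in> space M"
        unfolding D_def Dset_def by blast
      then show "x \<in> (\<Union>n. P n)" unfolding P_def using Mx_ge[of n n h x] by (auto intro: less_le_trans)
    qed
    then have "measure M D \<le> measure M (\<Union>n. P n)"
      by (intro P.finite_measure_mono) auto
    then have U1: "measure M (\<Union>n. P n) = 1" using D1 P.prob_le_1[of "\<Union>n. P n"] by linarith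
    have lim: "(\<lambda>n. measure M (P n)) \<longlonglongrightarrow> 1"
    proof -
      have "range P \<subseteq> sets M" using Pm by blast
      then show ?thesis using Lim_measure_incseq[of P M] inc U1 by auto
    qed
    define \<gamma> where "\<gamma> = c - measure M F"
    have g0: "\<gamma> > 0" unfolding \<gamma>_def using c by simp
    have "eventually (\<lambda>n. dist (measure M (P n)) 1 < \<gamma> / (2 * b)) sequentially"
      using lim g0 b0 by (intro tendstoD) auto
    then obtain N where N: "\<forall>n\<ge>N. dist (measure M (P n)) 1 < \<gamma> / (2 * b)"
      by (auto simp: eventually_sequentially)
    define n where "n = N"
    have n: "1 - measure M (P n) < \<gamma> / (2 * b)"
      using N[rule_format, of N] unfolding n_def by (simp add: dist_real_def)
    have i1: "integrable M (\<lambda>x. h x * indicator (P n) x)"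
      by (rule P.integrable_const_bound[where B=b]) (auto simp: indicator_def hb less_imp_le[OF b0])
    have i2: "integrable M (\<lambda>x. b * indicator (space M - P n) x)"
      by (rule P.integrable_const_bound[where B=b]) (auto simp: indicator_def b0 less_imp_le)
    have ih: "integrable M h"
      by (rule P.integrable_const_bound[where B=b]) (auto simp: hb)
    have "(\<integral>x. h x * indicator (P n) x - b * indicator (space M - P n) x \<partial>M) \<le> (\<integral>x. h x \<partial>M)"
      by (intro integral_mono Bochner_Integration.integrable_diff i1 i2 ih)
         (auto simp: indicator_def hb h_def b_def)
    moreover have "(\<integral>x. h x * indicator (P n) x - b * indicator (space M - P n) x \<partial>M)
        = (\<integral>x. h x * indicator (P n) x \<partial>M) - b * measure M (space M - P n)"
      using Bochner_Integration.integral_diff[OF i1 i2] by simp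
    moreover have "0 \<le> (\<integral>x. h x * indicator (P n) x \<partial>M)"
      unfolding P_def by (rule maximal[OF hm hb less_imp_le[OF b0]])
    moreover have compl: "measure M (space M - P n) = 1 - measure M (P n)"
      by (rule P.prob_compl) simp
    moreover have "(\<integral>x. h x \<partial>M) = measure M F - c"
      unfolding h_def using ih
      by (subst Bochner_Integration.integral_diff) (auto simp: P.prob_space P.emeasure_eq_measure)
    ultimately have "- (b * measure M (space M - P n)) \<le> measure M F - c" by linarith
    then have X1: "- (b * (1 - measure M (P n))) \<le> - \<gamma>" by (simp only: compl \<gamma>_def)
    have "b * (1 - measure M (P n)) < b * (\<gamma> / (2 * b))"
      using n b0 by (intro mult_strict_left_mono) auto
    also have "b * (\<gamma> / (2 * b)) = \<gamma> / 2" using b0 by simp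
    finally have X2: "b * (1 - measure M (P n)) < \<gamma> / 2" .
    define X where "X = b * (1 - measure M (P n))"
    from X1 X2 g0 show False unfolding X_def[symmetric] by linarith
  qed
  ultimately have "measure M D = 0" by blast
  then show ?thesis unfolding D_def h_def by (simp add: P.emeasure_eq_measure)
qed

end

context erg begin

lemma record_time:
  assumes X: "\<forall>B::real. \<exists>n>0. S h n x > B"
  shows "\<exists>u>u0. \<forall>s<u. S h s x < S h u x"
proof -
  define Bd where "Bd = Max ((\<lambda>s. S h s x) ` {..u0})"
  have Bd: "s \<le> u0 \<Longrightarrow> S h s x \<le> Bd" for s unfolding Bd_def by (intro Max_ge) auto
  obtain n where "n > 0" "S h n x > Bd" using X by blast
  define u where "u = (LEAST n. S h n x > Bd)"
  have u: "S h u x > Bd" unfolding u_def by (rule LeastI) fact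
  have "u > u0" using Bd[of u] u by (cases "u \<le> u0") auto
  moreover have "S h s x < S h u x" if "s < u" for s
  proof (cases "s \<le> u0")
    case True then show ?thesis using Bd u by fastforce
  next
    case False
    have "\<not> S h s x > Bd" using not_less_Least[of s "\<lambda>n. S h n x > Bd"] \<open>s < u\<close> unfolding u_def by blast
    then show ?thesis using u by simp
  qed
  ultimately show ?thesis by blast
qed

lemma sum_center:
  assumes "m \<le> k"
  shows "(\<Sum>i\<in>{- int m..int m}. g (nat (int k + i))) = (\<Sum>j\<in>{k - m..k + m}. g j)"
  by (rule sum.reindex_bij_witness[of _ "\<lambda>j. int j - int k" "\<lambda>i. nat (int k + i)"])
     (use assms in auto)

lemma bilat_meas[measurable]: "f \<in> borel_measurable M \<Longrightarrow> bilat_avg M T f n \<in> borel_measurable M"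
proof -
  assume fm: "f \<in> borel_measurable M"
  have "(\<lambda>x. \<Sum>i\<in>{- int n..int n}. f (ipow M T i x)) \<in> borel_measurable M"
    by (intro borel_measurable_sum measurable_compose[OF ipow_meas fm])
  then show ?thesis unfolding bilat_avg_def[abs_def] by measurable
qed

end

context erg begin

lemma lin_aux:
  fixes ca cb ea eb eN e eu B1 B2 :: real
  assumes "ca \<le> 5/4*ea + B1" "3/4*eb - B2 \<le> cb" "6*eN + 6*e + 8*(\<bar>B1\<bar>+\<bar>B2\<bar>) < eu"
    "2*ea \<le> eu" "eb = eu - eN - e"
  shows "0 < cb - ca"
proof -
  have a1: "4*ca \<le> 5*ea + 4*B1" using assms(1) by (simp add: field_simps)
  have a2: "3*eb - 4*B2 \<le> 4*cb" using assms(2) by (simp add: field_simps)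
  have a3: "6*eN + 6*e + 8*\<bar>B1\<bar> + 8*\<bar>B2\<bar> < eu" using assms(3) by (simp add: field_simps)
  show ?thesis using a1 a2 a3 assms(4-5) abs_ge_self[of B1] abs_ge_self[of B2] by linarith
qed

lemma main_contra:
  assumes fm[measurable]: "f \<in> borel_measurable M"
    and FN: "F = {x \<in> space M. \<forall>n>N. bilat_avg M T f n x \<le> 0}"
    and e0: "0 < measure M F"
    and x: "x \<in> space M" and X: "\<forall>B::real. \<exists>n>0. S f n x > B"
    and up: "\<And>n. (\<Sum>i<n. indicator F ((T ^^ i) x) :: real) \<le> 5/4 * (measure M F * real n) + B1"
    and lo: "\<And>n. 3/4 * (measure M F * real n) - B2 \<le> (\<Sum>i<n. indicator F ((T ^^ i) x) :: real)"
  shows False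
proof -
  define e where "e = measure M F"
  have e: "e > 0" using e0 e_def by simp
  define C where "C n = (\<Sum>i<n. indicator F ((T ^^ i) x) :: real)" for n
  have up': "C n \<le> 5/4 * (e * real n) + B1" for n using up[of n] unfolding C_def e_def by simp
  have lo': "3/4 * (e * real n) - B2 \<le> C n" for n using lo[of n] unfolding C_def e_def by simp
  define K where "K = 6 * (real N + 1) + 8 * (\<bar>B1\<bar> + \<bar>B2\<bar>) / e"
  obtain u where u: "u > nat \<lceil>K\<rceil> + 2 * N + 4" and rec: "\<forall>s<u. S f s x < S f u x"
    using record_time[OF X] by blast
  have uK: "real u > K" using u by linarith
  define a where "a = u div 2"
  define b where "b = u - N - 1"
  have ab: "a \<le> b" unfolding a_def b_def using u by simp
  have a2: "2 * real a \<le> real u" unfolding a_def by linarith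
  have bu: "real b = real u - real N - 1" unfolding b_def using u by simp
  have "e * real u > e * K" using uK e by simp
  also have "e * K = 6 * e * (real N + 1) + 8 * (\<bar>B1\<bar> + \<bar>B2\<bar>)" unfolding K_def using e
    by (simp add: field_simps)
  finally have euK: "e * real u > 6 * (e * real N) + 6 * e + 8 * (\<bar>B1\<bar> + \<bar>B2\<bar>)"
    by (simp add: algebra_simps)
  have ea: "2 * (e * real a) \<le> e * real u" using a2 e by (simp add: mult_left_mono)
  have eb: "e * real b = e * real u - e * real N - e" unfolding bu by (simp add: algebra_simps)
  have "C b - C a > 0"
    by (rule lin_aux[OF up'[of a] lo'[of b] euK ea eb])
  moreover have "C b - C a = (\<Sum>k\<in>{a..<b}. indicator F ((T ^^ k) x))"
    unfolding C_def using ab by (simp add: lessThan_atLeast0 sum_diff_nat_ivl)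
  ultimately obtain k where k: "k \<in> {a..<b}" "(T ^^ k) x \<in> F"
    by (metis (no_types, lifting) indicator_simps(2) less_irrefl sum.neutral)
  define n where "n = u - k - 1"
  have nN: "n > N" unfolding n_def using k b_def u by auto
  have nk: "n \<le> k" unfolding n_def using k a_def by auto
  have "bilat_avg M T f n ((T ^^ k) x) \<le> 0" using k(2) nN unfolding FN by auto
  then have num: "(\<Sum>i\<in>{- int n..int n}. f (ipow M T i ((T ^^ k) x))) \<le> 0"
    unfolding bilat_avg_def by (simp add: divide_le_0_iff add_pos_nonneg)
  have "(\<Sum>i\<in>{- int n..int n}. f (ipow M T i ((T ^^ k) x)))
      = (\<Sum>i\<in>{- int n..int n}. f ((T ^^ nat (int k + i)) x))"
    using nk by (intro sum.cong) (auto simp: ipow_T[OF x])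
  also have "\<dots> = (\<Sum>j\<in>{k - n..k + n}. f ((T ^^ j) x))"
    by (rule sum_center[OF nk])
  also have "{k - n..k + n} = {k - n..<u}" unfolding n_def using k b_def u by auto
  also have "(\<Sum>j\<in>{k - n..<u}. f ((T ^^ j) x)) = S f u x - S f (k - n) x"
  proof -
    have "k < u" using k unfolding b_def by auto
    then have "k - n \<le> u" by linarith
    then show ?thesis unfolding S_def
      using sum_diff_nat_ivl[of 0 "k - n" u "\<lambda>j. f ((T^^j) x)"] by (simp add: lessThan_atLeast0)
  qed
  finally have "S f u x - S f (k - n) x \<le> 0" using num by simp
  moreover have "k - n < u" unfolding n_def using k b_def u by auto
  ultimately show False using rec by force
qed

end

context erg begin

lemma final:
  assumes fm[measurable]: "f \<in> borel_measurable M"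
    and pos: "emeasure M (\<Union>N\<in>{0<..}. \<Inter>n\<in>{N<..}. {x \<in> space M. bilat_avg M T f n x \<le> 0}) > 0"
  shows "AE x in M. (SUP n\<in>{0<..}. ereal (\<Sum>i<n. f ((T ^^ i) x))) < \<infinity>"
proof -
  define A where "A = Dset f"
  have Am[measurable]: "A \<in> sets M" unfolding A_def by (rule Dset_sets[OF fm])
  have "measure M A = 0 \<or> measure M A = 1"
    unfolding A_def by (rule ergod[OF Dset_sets[OF fm] Dset_inv])
  moreover have "measure M A \<noteq> 1"
  proof
    assume A1: "measure M A = 1"
    define En where "En N = {x \<in> space M. \<forall>n>N. bilat_avg M T f n x \<le> 0}" for N
    have Enm[measurable]: "En N \<in> sets M" for N unfolding En_def by measurable
    have sub: "(\<Union>N\<in>{0<..}. \<Inter>n\<in>{N<..}. {x \<in> space M. bilat_avg M T f n x \<le> 0}) \<subseteq> (\<Union>N. En N)"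
    proof
      fix x assume "x \<in> (\<Union>N\<in>{0<..}. \<Inter>n\<in>{N<..}. {x \<in> space M. bilat_avg M T f n x \<le> 0})"
      then obtain N where N: "\<And>n. n > N \<Longrightarrow> x \<in> space M \<and> bilat_avg M T f n x \<le> 0" by auto
      have "x \<in> space M" using N[of "Suc N"] by simp
      then show "x \<in> (\<Union>N. En N)" using N unfolding En_def by blast
    qed
    have "\<exists>N. emeasure M (En N) > 0"
    proof (rule ccontr)
      assume "\<not> ?thesis"
      then have "emeasure M (En N) = 0" for N by (simp add: not_less)
      then have "emeasure M (\<Union>N. En N) = 0" by (intro emeasure_UN_eq_0) auto
      moreover have "emeasure M (\<Union>N\<in>{0<..}. \<Inter>n\<in>{N<..}. {x \<in> space M. bilat_avg M T f n x \<le> 0}) \<le> emeasure M (\<Union>N. En N)"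
        by (intro emeasure_mono sub) auto
      ultimately show False using pos by simp
    qed
    then obtain N where N: "emeasure M (En N) > 0" by blast
    define F where "F = En N"
    have Fm[measurable]: "F \<in> sets M" unfolding F_def by simp
    define e where "e = measure M F"
    have e0: "0 < e" using N unfolding e_def F_def by (simp add: P.emeasure_eq_measure)
    define h1 where "h1 = (\<lambda>x. indicator F x - 5/4 * e :: real)"
    define h2 where "h2 = (\<lambda>x. indicator (space M - F) x - (1 - e + e/4) :: real)"
    have D1: "emeasure M (Dset h1) = 0" unfolding h1_def by (rule birk[OF Fm]) (use e0 e_def in simp)
    have cF: "measure M (space M - F) = 1 - e" unfolding e_def by (rule P.prob_compl) simp
    have D2: "emeasure M (Dset h2) = 0" unfolding h2_def by (rule birk) (use e0 cF in auto)
    have h1m: "h1 \<in> borel_measurable M" unfolding h1_def by measurable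
    have h2m: "h2 \<in> borel_measurable M" unfolding h2_def by measurable
    have "\<exists>x. x \<in> A \<and> x \<notin> Dset h1 \<and> x \<notin> Dset h2"
    proof (rule ccontr)
      assume "\<not> ?thesis"
      then have "A \<subseteq> Dset h1 \<union> Dset h2" by blast
      then have "emeasure M A \<le> emeasure M (Dset h1 \<union> Dset h2)"
        by (intro emeasure_mono) (auto intro: Dset_sets h1m h2m)
      also have "\<dots> \<le> emeasure M (Dset h1) + emeasure M (Dset h2)"
        by (intro emeasure_subadditive Dset_sets h1m h2m)
      finally have "emeasure M A = 0" using D1 D2 by simp
      then show False using A1 by (simp add: P.emeasure_eq_measure)
    qed
    then obtain x where xA: "x \<in> A" and x1: "x \<notin> Dset h1" and x2: "x \<notin> Dset h2" by blast
    have x: "x \<in> space M" and X: "\<forall>B::real. \<exists>n>0. S f n x > B" using xA unfolding A_def by (auto simp: Dset_real)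
    have "\<exists>B::nat. \<forall>n>0. S h1 n x \<le> real B" using x1 x unfolding Dset_def by (auto simp: not_less) (metis gr_implies_not0)
    then obtain B1 :: nat where B1: "\<And>n. n > 0 \<Longrightarrow> S h1 n x \<le> real B1" by blast
    have "\<exists>B::nat. \<forall>n>0. S h2 n x \<le> real B" using x2 x unfolding Dset_def by (auto simp: not_less) (metis gr_implies_not0)
    then obtain B2 :: nat where B2: "\<And>n. n > 0 \<Longrightarrow> S h2 n x \<le> real B2" by blast
    define C where "C n = (\<Sum>i<n. indicator F ((T ^^ i) x) :: real)" for n
    have S1: "S h1 n x = C n - 5/4 * (e * real n)" for n
      unfolding S_def h1_def C_def by (simp add: sum_subtractf)
    have S2: "S h2 n x = real n - C n - (1 - e + e/4) * real n" for n
    proof -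
      have "S h2 n x = (\<Sum>i<n. (1 - (1 - e + e/4)) - indicator F ((T ^^ i) x))"
        unfolding S_def h2_def using funpow_space[OF x] by (intro sum.cong) (auto simp: indicator_def)
      also have "\<dots> = real n * (1 - (1 - e + e/4)) - C n" unfolding C_def by (simp add: sum_subtractf)
      finally show ?thesis by (simp add: algebra_simps)
    qed
    have up: "C n \<le> 5/4 * (e * real n) + real B1" for n
    proof (cases "n = 0")
      case True then show ?thesis by (simp add: C_def)
    next
      case False then show ?thesis using B1[of n] S1[of n] by simp
    qed
    have lo: "3/4 * (e * real n) - real B2 \<le> C n" for n
    proof (cases "n = 0")
      case True then show ?thesis by (simp add: C_def)
    next
      case False
      then have "real n - C n - (1 - e + e/4) * real n \<le> real B2" using B2[of n] S2[of n] by simp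
      moreover have "real n - (1 - e + e/4) * real n = 3/4 * (e * real n)" by (simp add: algebra_simps)
      ultimately show ?thesis by linarith
    qed
    show False
      by (rule main_contra[OF fm F_def[unfolded En_def] _ x X, of "real B1" "real B2"])
         (use e0 up lo in \<open>auto simp: e_def C_def\<close>)
  qed
  ultimately have A0: "measure M A = 0" by blast
  have "A \<in> null_sets M" using A0 Am by (simp add: null_setsI P.emeasure_eq_measure)
  moreover have "{x \<in> space M. \<not> (SUP n\<in>{0<..}. ereal (\<Sum>i<n. f ((T ^^ i) x))) < \<infinity>} \<subseteq> A"
  proof
    fix x assume "x \<in> {x \<in> space M. \<not> (SUP n\<in>{0<..}. ereal (\<Sum>i<n. f ((T ^^ i) x))) < \<infinity>}"
    then have x: "x \<in> space M" and ns: "\<not> (SUP n\<in>{0<..}. ereal (\<Sum>i<n. f ((T ^^ i) x))) < \<infinity>" by auto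
    show "x \<in> A"
    proof (rule ccontr)
      assume "x \<notin> A"
      then have "\<exists>B::nat. \<forall>n>0. S f n x \<le> real B"
        using x unfolding A_def Dset_def by (auto simp: not_less) (metis gr_implies_not0)
      then obtain B :: nat where B: "\<And>n. n > 0 \<Longrightarrow> S f n x \<le> real B" by blast
      have "(SUP n\<in>{0<..}. ereal (\<Sum>i<n. f ((T ^^ i) x))) \<le> ereal (real B)"
        by (rule SUP_least) (use B in \<open>auto simp: S_def\<close>)
      then show False using ns by (simp add: order_le_less_trans)
    qed
  qed
  ultimately show ?thesis by (rule AE_I')
qed

end

theorem lemma2:
  fixes M :: "'a measure" and T :: "'a \<Rightarrow> 'a" and f :: "'a \<Rightarrow> real"
  assumes "ergodic_ipt M T"
    and "f \<in> borel_measurable M"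
    and "emeasure M (\<Union>N\<in>{0<..}. \<Inter>n\<in>{N<..}. {x \<in> space M. bilat_avg M T f n x \<le> 0}) > 0"
  shows "AE x in M. (SUP n\<in>{0<..}. ereal (\<Sum>i<n. f ((T ^^ i) x))) < \<infinity>"
proof -
  interpret erg M T by (rule erg.intro) (rule assms(1))
  show ?thesis by (rule final[OF assms(2) assms(3)])
qed

end
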